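(* Let $\mathcal{H}=(V,E)$ be a hypergraph and let $\mathbf{v}^*$ be an optimal solution of the linear program: minimize $\sum_{x\in V}v_x$ subject to $\sum_{x\in e}v_x\ge1$ for all $e\in E$ and $v_x\ge0$ for all $x\in V$. Consider the linear program: maximize $\sum_{x\in V}\psi_x$ subject to $\sum_{x\in e}\psi_x\le 1$ for every $e\in E$ with $\sum_{x\in e}v^*_x=1$, $\psi_x\le 0$ for every $x$ with $v^*_x=0$, and $\psi_x\ge0$ for all $x\in V$. Then $\mathbf{v}^*$ is an optimal solution of the second linear program. *)

theory Defs
  imports Complex_Main
begin

definition hypergraph :: "'a set \<Rightarrow> 'a set set \<Rightarrow> bool" where
  "hypergraph V E \<longleftrightarrow> finite V \<and> (\<forall>e\<in>E. e \<subseteq> V)"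

definition lp1_feasible :: "'a set \<Rightarrow> 'a set set \<Rightarrow> ('a \<Rightarrow> real) \<Rightarrow> bool" where
  "lp1_feasible V E v \<longleftrightarrow> (\<forall>e\<in>E. (\<Sum>x\<in>e. v x) \<ge> 1) \<and> (\<forall>x\<in>V. v x \<ge> 0)"

definition lp1_optimal :: "'a set \<Rightarrow> 'a set set \<Rightarrow> ('a \<Rightarrow> real) \<Rightarrow> bool" where
  "lp1_optimal V E v \<longleftrightarrow> lp1_feasible V E v \<and>
     (\<forall>w. lp1_feasible V E w \<longrightarrow> (\<Sum>x\<in>V. v x) \<le> (\<Sum>x\<in>V. w x))"

definition lp2_feasible :: "'a set \<Rightarrow> 'a set set \<Rightarrow> ('a \<Rightarrow> real) \<Rightarrow> ('a \<Rightarrow> real) \<Rightarrow> bool" where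
  "lp2_feasible V E vs \<psi> \<longleftrightarrow>
     (\<forall>e\<in>E. (\<Sum>x\<in>e. vs x) = 1 \<longrightarrow> (\<Sum>x\<in>e. \<psi> x) \<le> 1) \<and>
     (\<forall>x\<in>V. vs x = 0 \<longrightarrow> \<psi> x \<le> 0) \<and>
     (\<forall>x\<in>V. \<psi> x \<ge> 0)"

definition lp2_optimal :: "'a set \<Rightarrow> 'a set set \<Rightarrow> ('a \<Rightarrow> real) \<Rightarrow> ('a \<Rightarrow> real) \<Rightarrow> bool" where
  "lp2_optimal V E vs \<psi> \<longleftrightarrow> lp2_feasible V E vs \<psi> \<and>
     (\<forall>\<phi>. lp2_feasible V E vs \<phi> \<longrightarrow> (\<Sum>x\<in>V. \<phi> x) \<le> (\<Sum>x\<in>V. \<psi> x))"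

end

theory Submission
  imports Defs
begin

lemma sum_w: "(\<Sum>x\<in>A. (1+\<epsilon>)*vs x - \<epsilon>*\<phi> x) = (1+\<epsilon>)*(\<Sum>x\<in>A. vs x) - \<epsilon>*(\<Sum>x\<in>A. \<phi> x)"
  for vs \<phi> :: "'a \<Rightarrow> real"
  by (simp add: sum_subtractf sum_distrib_left)

theorem lemmaF1:
  fixes V :: "'a set" and E :: "'a set set" and vs :: "'a \<Rightarrow> real"
  assumes "hypergraph V E"
    and "lp1_optimal V E vs"
  shows "lp2_optimal V E vs vs"
proof -
  have finV: "finite V" and EV: "\<forall>e\<in>E. e \<subseteq> V" using assms(1) by (auto simp: hypergraph_def)
  have finE: "finite E" using finV EV by (metis Pow_iff finite_Pow_iff finite_subset subsetI)
  have feas: "lp1_feasible V E vs" and opt: "\<And>w. lp1_feasible V E w \<Longrightarrow> (\<Sum>x\<in>V. vs x) \<le> (\<Sum>x\<in>V. w x)"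
    using assms(2) by (auto simp: lp1_optimal_def)
  have f2: "lp2_feasible V E vs vs" using feas by (auto simp: lp2_feasible_def lp1_feasible_def)
  moreover have "(\<Sum>x\<in>V. \<phi> x) \<le> (\<Sum>x\<in>V. vs x)" if ph: "lp2_feasible V E vs \<phi>" for \<phi>
  proof -
    define w where "w = (\<lambda>\<epsilon>::real. \<lambda>x. (1+\<epsilon>)*vs x - \<epsilon>*\<phi> x)"
    have h1: "\<forall>\<^sub>F \<epsilon> in at_right 0. \<forall>x\<in>V. vs x > 0 \<longrightarrow> w \<epsilon> x > 0"
    proof (rule eventually_ball_finite[OF finV], intro ballI)
      fix x assume "x \<in> V"
      show "\<forall>\<^sub>F \<epsilon> in at_right 0. vs x > 0 \<longrightarrow> w \<epsilon> x > 0"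
      proof (cases "vs x > 0")
        case True
        have "((\<lambda>\<epsilon>. (1+\<epsilon>)*vs x - \<epsilon>*\<phi> x) \<longlongrightarrow> (1+0)*vs x - 0*\<phi> x) (at_right (0::real))"
          by (intro tendsto_intros)
        then have "\<forall>\<^sub>F \<epsilon> in at_right 0. w \<epsilon> x > 0" using True
          unfolding w_def by (auto dest: order_tendstoD(1))
        then show ?thesis by (auto elim: eventually_mono)
      qed auto
    qed
    have h2: "\<forall>\<^sub>F \<epsilon> in at_right 0. \<forall>e\<in>E. (\<Sum>x\<in>e. vs x) \<noteq> 1 \<longrightarrow> (\<Sum>x\<in>e. w \<epsilon> x) > 1"
    proof (rule eventually_ball_finite[OF finE], intro ballI)
      fix e assume "e \<in> E"
      then have ge: "(\<Sum>x\<in>e. vs x) \<ge> 1" using feas by (auto simp: lp1_feasible_def)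
      show "\<forall>\<^sub>F \<epsilon> in at_right 0. (\<Sum>x\<in>e. vs x) \<noteq> 1 \<longrightarrow> (\<Sum>x\<in>e. w \<epsilon> x) > 1"
      proof (cases "(\<Sum>x\<in>e. vs x) \<noteq> 1")
        case True
        have "((\<lambda>\<epsilon>. (1+\<epsilon>)*(\<Sum>x\<in>e. vs x) - \<epsilon>*(\<Sum>x\<in>e. \<phi> x)) \<longlongrightarrow> (1+0)*(\<Sum>x\<in>e. vs x) - 0*(\<Sum>x\<in>e. \<phi> x)) (at_right (0::real))"
          by (intro tendsto_intros)
        then have "\<forall>\<^sub>F \<epsilon> in at_right 0. (1+\<epsilon>)*(\<Sum>x\<in>e. vs x) - \<epsilon>*(\<Sum>x\<in>e. \<phi> x) > 1" using True ge
          by (auto intro: order_tendstoD(1))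
        then show ?thesis unfolding w_def sum_w by (auto elim: eventually_mono)
      qed auto
    qed
    have h3: "\<forall>\<^sub>F \<epsilon> in at_right (0::real). \<epsilon> > 0" by (simp add: eventually_at_right_less)
    obtain \<epsilon> where e1: "\<forall>x\<in>V. vs x > 0 \<longrightarrow> w \<epsilon> x > 0"
      and e2: "\<forall>e\<in>E. (\<Sum>x\<in>e. vs x) \<noteq> 1 \<longrightarrow> (\<Sum>x\<in>e. w \<epsilon> x) > 1" and e3: "\<epsilon> > 0"
      using eventually_happens[OF eventually_conj[OF h1 eventually_conj[OF h2 h3]]] by auto
    have "lp1_feasible V E (w \<epsilon>)"
      unfolding lp1_feasible_def
    proof (intro conjI ballI)
      fix e assume eE: "e \<in> E"
      show "(\<Sum>x\<in>e. w \<epsilon> x) \<ge> 1"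
      proof (cases "(\<Sum>x\<in>e. vs x) = 1")
        case True
        then have "(\<Sum>x\<in>e. \<phi> x) \<le> 1" using ph eE by (auto simp: lp2_feasible_def)
        then have "\<epsilon> * (\<Sum>x\<in>e. \<phi> x) \<le> \<epsilon>" using e3 by (simp add: mult_left_le)
        then show ?thesis unfolding w_def sum_w True by simp
      next
        case False then show ?thesis using e2 eE by force
      qed
    next
      fix x assume xV: "x \<in> V"
      show "w \<epsilon> x \<ge> 0"
      proof (cases "vs x = 0")
        case True
        then have "\<phi> x = 0" using ph xV by (force simp: lp2_feasible_def)
        then show ?thesis using True by (simp add: w_def)
      next
        case False
        then have "vs x > 0" using feas xV by (force simp: lp1_feasible_def)
        then show ?thesis using e1 xV by force
      qed
    qed
    from opt[OF this] have "(\<Sum>x\<in>V. vs x) \<le> (1+\<epsilon>)*(\<Sum>x\<in>V. vs x) - \<epsilon>*(\<Sum>x\<in>V. \<phi> x)"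
      unfolding w_def sum_w .
    then have "\<epsilon> * (\<Sum>x\<in>V. \<phi> x) \<le> \<epsilon> * (\<Sum>x\<in>V. vs x)" by (simp add: algebra_simps)
    then show ?thesis using e3 by simp
  qed
  ultimately show ?thesis by (simp add: lp2_optimal_def)
qed

end
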